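(* Let $\mathbb{K}=(G,M,I)$ be a formal context. The number of meet-irreducible elements of the lattice ${\downarrow}\operatorname{Ext}(\mathbb{K})$ of all closure systems on $G$ contained in $\operatorname{Ext}(\mathbb{K})$ (ordered by inclusion) equals the number of covering pairs $A\prec B$ in the lattice $(\operatorname{Ext}(\mathbb{K}),\subseteq)$, i.e. $|\prec_{\operatorname{Ext}(\mathbb{K})}|$.
   Context: A formal context is a triple $(G,M,I)$ with finite nonempty sets $G$, $M$ and $I\subseteq G\times M$; derivations $A'=\{m\mid\forall a\in A:(a,m)\in I\}$, $B'=\{g\mid\forall b\in B:(g,b)\in I\}$. $\operatorname{Ext}(\mathbb{K})=\{A\subseteq G\mid A''=A\}$. A closure system on $G$ is a family of subsets of $G$ containing $G$ and closed under intersections. $\prec_{\operatorname{Ext}(\mathbb{K})}$ is the covering relation of $(\operatorname{Ext}(\mathbb{K}),\subseteq)$. An element $x$ of a lattice is meet-irreducible if $x\neq\top$ and $x=\bigwedge Y$ implies $x\in Y$. *)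

theory Defs
  imports Main
begin

definition formal_context :: "'g set \<Rightarrow> 'm set \<Rightarrow> ('g \<times> 'm) set \<Rightarrow> bool" where
  "formal_context G M I \<longleftrightarrow> finite G \<and> finite M \<and> G \<noteq> {} \<and> M \<noteq> {} \<and> I \<subseteq> G \<times> M"

definition intent :: "'m set \<Rightarrow> ('g \<times> 'm) set \<Rightarrow> 'g set \<Rightarrow> 'm set" where
  "intent M I A = {m \<in> M. \<forall>a\<in>A. (a, m) \<in> I}"

definition extent :: "'g set \<Rightarrow> ('g \<times> 'm) set \<Rightarrow> 'm set \<Rightarrow> 'g set" where
  "extent G I B = {g \<in> G. \<forall>b\<in>B. (g, b) \<in> I}"

definition Ext :: "'g set \<Rightarrow> 'm set \<Rightarrow> ('g \<times> 'm) set \<Rightarrow> 'g set set" where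
  "Ext G M I = {A. A \<subseteq> G \<and> extent G I (intent M I A) = A}"

definition closure_system :: "'g set \<Rightarrow> 'g set set \<Rightarrow> bool" where
  "closure_system G F \<longleftrightarrow> F \<subseteq> Pow G \<and> G \<in> F \<and> (\<forall>S. S \<subseteq> F \<and> S \<noteq> {} \<longrightarrow> \<Inter>S \<in> F)"

definition down_closure_systems :: "'g set \<Rightarrow> 'g set set \<Rightarrow> 'g set set set" where
  "down_closure_systems G E = {F. closure_system G F \<and> F \<subseteq> E}"

definition is_glb :: "'a set set \<Rightarrow> 'a set set \<Rightarrow> 'a set \<Rightarrow> bool" where
  "is_glb L Y x \<longleftrightarrow> x \<in> L \<and> (\<forall>y\<in>Y. x \<subseteq> y) \<and> (\<forall>z\<in>L. (\<forall>y\<in>Y. z \<subseteq> y) \<longrightarrow> z \<subseteq> x)"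

definition meet_irreducible :: "'a set set \<Rightarrow> 'a set \<Rightarrow> bool" where
  "meet_irreducible L x \<longleftrightarrow> x \<in> L \<and> \<not> (\<forall>y\<in>L. y \<subseteq> x) \<and>
     (\<forall>Y. Y \<subseteq> L \<and> is_glb L Y x \<longrightarrow> x \<in> Y)"

definition covers :: "'a set set \<Rightarrow> ('a set \<times> 'a set) set" where
  "covers L = {(A, B). A \<in> L \<and> B \<in> L \<and> A \<subset> B \<and> \<not> (\<exists>C\<in>L. A \<subset> C \<and> C \<subset> B)}"

end

theory Submission
  imports Defs
begin

definition Fab :: "'g set set \<Rightarrow> 'g set \<Rightarrow> 'g set \<Rightarrow> 'g set set" where
  "Fab E A B = {C \<in> E. A \<subseteq> C \<longrightarrow> B \<subseteq> C}"

lemma ext_cs: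
  assumes "formal_context G M I"
  shows "closure_system G (Ext G M I)"
  unfolding closure_system_def
proof (intro conjI allI impI)
  show "Ext G M I \<subseteq> Pow G" by (auto simp: Ext_def)
  show "G \<in> Ext G M I" by (auto simp: Ext_def extent_def intent_def)
next
  fix S assume S: "S \<subseteq> Ext G M I \<and> S \<noteq> {}"
  have sub: "\<Inter>S \<subseteq> G" using S by (auto simp: Ext_def)
  have "extent G I (intent M I (\<Inter>S)) \<subseteq> \<Inter>S"
  proof
    fix g assume g: "g \<in> extent G I (intent M I (\<Inter>S))"
    show "g \<in> \<Inter>S"
    proof
      fix A assume "A \<in> S"
      hence AE: "extent G I (intent M I A) = A" using S by (auto simp: Ext_def)
      have "intent M I A \<subseteq> intent M I (\<Inter>S)" using \<open>A \<in> S\<close> by (auto simp: intent_def)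
      hence "g \<in> extent G I (intent M I A)" using g by (auto simp: extent_def)
      thus "g \<in> A" using AE by simp
    qed
  qed
  moreover have "\<Inter>S \<subseteq> extent G I (intent M I (\<Inter>S))"
    using sub by (auto simp: extent_def intent_def)
  ultimately show "\<Inter>S \<in> Ext G M I" using sub by (auto simp: Ext_def)
qed

lemma Fab_in_L:
  assumes cs: "closure_system G E" and ab: "(A,B) \<in> covers E"
  shows "Fab E A B \<in> down_closure_systems G E"
proof -
  have EG: "E \<subseteq> Pow G" "G \<in> E" using cs by (auto simp: closure_system_def)
  have "B \<subseteq> G" using ab EG by (auto simp: covers_def)
  have "closure_system G (Fab E A B)"
    unfolding closure_system_def
  proof (intro conjI allI impI)
    show "Fab E A B \<subseteq> Pow G" using EG by (auto simp: Fab_def)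
    show "G \<in> Fab E A B" using EG \<open>B \<subseteq> G\<close> by (auto simp: Fab_def)
  next
    fix S assume S: "S \<subseteq> Fab E A B \<and> S \<noteq> {}"
    hence "\<Inter>S \<in> E" using cs unfolding closure_system_def Fab_def by blast
    moreover have "A \<subseteq> \<Inter>S \<longrightarrow> B \<subseteq> \<Inter>S" using S by (auto simp: Fab_def)
    ultimately show "\<Inter>S \<in> Fab E A B" by (simp add: Fab_def)
  qed
  thus ?thesis by (auto simp: down_closure_systems_def Fab_def)
qed

lemma inter_L:
  assumes "Y \<subseteq> down_closure_systems G E" "Y \<noteq> {}"
  shows "\<Inter>Y \<in> down_closure_systems G E"
proof -
  have "closure_system G (\<Inter>Y)"
    unfolding closure_system_def
  proof (intro conjI allI impI)
    show "\<Inter>Y \<subseteq> Pow G" using assms unfolding down_closure_systems_def closure_system_def by blast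
    show "G \<in> \<Inter>Y" using assms by (auto simp: down_closure_systems_def closure_system_def)
  next
    fix S assume S: "S \<subseteq> \<Inter>Y \<and> S \<noteq> {}"
    show "\<Inter>S \<in> \<Inter>Y"
    proof
      fix F assume "F \<in> Y"
      hence "closure_system G F" using assms by (auto simp: down_closure_systems_def)
      moreover have "S \<subseteq> F" using S \<open>F \<in> Y\<close> by auto
      ultimately show "\<Inter>S \<in> F" using S by (auto simp: closure_system_def)
    qed
  qed
  moreover have "\<Inter>Y \<subseteq> E" using assms by (auto simp: down_closure_systems_def)
  ultimately show ?thesis by (simp add: down_closure_systems_def)
qed

lemma Fab_mi:
  assumes cs: "closure_system G E" and ab: "(A,B) \<in> covers E"
  shows "meet_irreducible (down_closure_systems G E) (Fab E A B)"
proof -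
  let ?L = "down_closure_systems G E"
  have EL: "E \<in> ?L" using cs by (simp add: down_closure_systems_def)
  have AE: "A \<in> E" and BE: "B \<in> E" and AB: "A \<subset> B"
    and cov: "\<not> (\<exists>C\<in>E. A \<subset> C \<and> C \<subset> B)" using ab by (auto simp: covers_def)
  have Anot: "A \<notin> Fab E A B" using AB by (auto simp: Fab_def)
  have "\<not> (\<forall>y\<in>?L. y \<subseteq> Fab E A B)" using EL AE Anot by blast
  moreover have "\<forall>Y. Y \<subseteq> ?L \<and> is_glb ?L Y (Fab E A B) \<longrightarrow> Fab E A B \<in> Y"
  proof (intro allI impI)
    fix Y assume Y: "Y \<subseteq> ?L \<and> is_glb ?L Y (Fab E A B)"
    show "Fab E A B \<in> Y"
    proof (cases "Y = {}")
      case True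
      have "\<forall>z\<in>?L. z \<subseteq> Fab E A B" using Y True unfolding is_glb_def by simp
      hence "E \<subseteq> Fab E A B" using EL by blast
      thus ?thesis using AE Anot by blast
    next
      case False
      have "\<Inter>Y \<in> ?L" using inter_L[of Y G E] Y False by simp
      moreover have "\<forall>y\<in>Y. \<Inter>Y \<subseteq> y" by blast
      ultimately have "\<Inter>Y \<subseteq> Fab E A B" using Y unfolding is_glb_def by blast
      hence "A \<notin> \<Inter>Y" using Anot by blast
      then obtain F where F: "F \<in> Y" "A \<notin> F" by blast
      have sub: "Fab E A B \<subseteq> F" using Y F(1) unfolding is_glb_def by simp
      have csF: "closure_system G F" "F \<subseteq> E" using Y F by (auto simp: down_closure_systems_def)
      have "F \<subseteq> Fab E A B"
      proof
        fix C assume C: "C \<in> F"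
        have CE: "C \<in> E" using C csF by auto
        show "C \<in> Fab E A B"
        proof (rule ccontr)
          assume "C \<notin> Fab E A B"
          hence AC: "A \<subseteq> C" and BC: "\<not> B \<subseteq> C" using CE by (auto simp: Fab_def)
          have "B \<in> Fab E A B" using BE by (auto simp: Fab_def)
          hence BF: "B \<in> F" using sub by auto
          have "{C, B} \<subseteq> F" using C BF by simp
          hence "\<Inter>{C, B} \<in> F" using csF(1) unfolding closure_system_def by blast
          hence CB: "C \<inter> B \<in> F" by simp
          hence "C \<inter> B \<in> E" using csF by auto
          moreover have "A \<subseteq> C \<inter> B" using AC AB by auto
          moreover have "C \<inter> B \<subset> B" using BC by auto
          ultimately have "C \<inter> B = A" using cov by auto
          thus False using CB F(2) by simp
        qed
      qed
      with sub F show ?thesis by auto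
    qed
  qed
  moreover have "Fab E A B \<in> ?L" using Fab_in_L[OF cs ab] .
  ultimately show ?thesis by (simp add: meet_irreducible_def)
qed

lemma exists_cover:
  assumes fin: "finite G" and EG: "E \<subseteq> Pow G" and X: "X \<in> E" and X': "X' \<in> E" "X \<subset> X'"
  shows "\<exists>B. (X,B) \<in> covers E \<and> B \<subseteq> X'"
proof -
  define S where "S = {C \<in> E. X \<subset> C \<and> C \<subseteq> X'}"
  have "finite (Pow G)" using fin by simp
  hence "finite E" using EG finite_subset by auto
  hence "finite S" unfolding S_def by simp
  moreover have "S \<noteq> {}" using X' unfolding S_def by auto
  ultimately have "\<exists>m\<in>S. \<forall>b\<in>S. b \<le> m \<longrightarrow> m = b"
    by (rule finite_has_minimal)
  then obtain B where B: "B \<in> S" and Bmin: "\<forall>b\<in>S. b \<le> B \<longrightarrow> B = b" by blast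
  have BE: "B \<in> E" "X \<subset> B" "B \<subseteq> X'" using B unfolding S_def by auto
  have nc: "\<not> (\<exists>C\<in>E. X \<subset> C \<and> C \<subset> B)"
  proof
    assume "\<exists>C\<in>E. X \<subset> C \<and> C \<subset> B"
    then obtain C where C: "C \<in> E" "X \<subset> C" "C \<subset> B" by blast
    hence "C \<in> S" using BE unfolding S_def by auto
    hence "B = C" using Bmin C(3) by auto
    thus False using C(3) by simp
  qed
  have "(X,B) \<in> covers E" unfolding covers_def using X BE nc by simp
  thus ?thesis using BE by blast
qed

lemma mi_Fab:
  assumes cs: "closure_system G E" and fin: "finite G"
    and mi: "meet_irreducible (down_closure_systems G E) F"
  shows "\<exists>A B. (A,B) \<in> covers E \<and> F = Fab E A B"
proof -
  let ?L = "down_closure_systems G E"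
  have EG: "E \<subseteq> Pow G" using cs by (simp add: closure_system_def)
  have FL: "F \<in> ?L" and ntop: "\<not> (\<forall>y\<in>?L. y \<subseteq> F)"
    and irr: "\<forall>Y. Y \<subseteq> ?L \<and> is_glb ?L Y F \<longrightarrow> F \<in> Y"
    using mi unfolding meet_irreducible_def by simp_all
  have csF: "closure_system G F" "F \<subseteq> E" using FL by (simp_all add: down_closure_systems_def)
  have GF: "G \<in> F" using csF(1) by (simp add: closure_system_def)
  have Finter: "\<And>S. S \<subseteq> F \<Longrightarrow> S \<noteq> {} \<Longrightarrow> \<Inter>S \<in> F"
    using csF(1) by (simp add: closure_system_def)
  have key: "\<exists>B. (X,B) \<in> covers E \<and> F \<subseteq> Fab E X B" if XE: "X \<in> E" "X \<notin> F" for X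
  proof -
    define X' where "X' = \<Inter>{C \<in> F. X \<subseteq> C}"
    have XG: "X \<subseteq> G" using XE EG by auto
    have "{C \<in> F. X \<subseteq> C} \<subseteq> F" by auto
    moreover have "{C \<in> F. X \<subseteq> C} \<noteq> {}" using GF XG by auto
    ultimately have X'F: "X' \<in> F" unfolding X'_def by (rule Finter)
    have "X \<subseteq> X'" unfolding X'_def by auto
    hence XX': "X \<subset> X'" using X'F XE by auto
    have "X' \<in> E" using X'F csF(2) by auto
    from exists_cover[OF fin EG XE(1) this XX']
    obtain B where B: "(X,B) \<in> covers E" "B \<subseteq> X'" by blast
    have "F \<subseteq> Fab E X B"
    proof
      fix C assume CF: "C \<in> F"
      hence "X \<subseteq> C \<longrightarrow> X' \<subseteq> C" unfolding X'_def by auto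
      moreover have "C \<in> E" using CF csF(2) by auto
      ultimately show "C \<in> Fab E X B" using B(2) unfolding Fab_def by auto
    qed
    thus ?thesis using B by blast
  qed
  define Y where "Y = {Fab E A B | A B. (A,B) \<in> covers E \<and> F \<subseteq> Fab E A B}"
  have YL: "Y \<subseteq> ?L"
  proof
    fix y assume "y \<in> Y"
    then obtain A B where "(A,B) \<in> covers E" "y = Fab E A B" unfolding Y_def by blast
    thus "y \<in> ?L" using Fab_in_L[OF cs] by simp
  qed
  have YF: "\<forall>y\<in>Y. F \<subseteq> y" unfolding Y_def by blast
  obtain y where "y \<in> ?L" "\<not> y \<subseteq> F" using ntop by blast
  then obtain X where X: "X \<in> E" "X \<notin> F" unfolding down_closure_systems_def by blast
  then obtain B0 where "(X,B0) \<in> covers E" "F \<subseteq> Fab E X B0" using key by blast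
  hence FY0: "Fab E X B0 \<in> Y" unfolding Y_def by blast
  have "\<Inter>Y \<subseteq> F"
  proof
    fix C assume C: "C \<in> \<Inter>Y"
    hence "C \<in> Fab E X B0" using FY0 by blast
    hence CE: "C \<in> E" unfolding Fab_def by simp
    show "C \<in> F"
    proof (rule ccontr)
      assume "C \<notin> F"
      then obtain B where B: "(C,B) \<in> covers E" "F \<subseteq> Fab E C B" using key CE by blast
      hence "Fab E C B \<in> Y" unfolding Y_def by blast
      hence "C \<in> Fab E C B" using C by blast
      moreover have "C \<subset> B" using B(1) by (simp add: covers_def)
      ultimately show False by (auto simp: Fab_def)
    qed
  qed
  have "is_glb ?L Y F" unfolding is_glb_def
  proof (intro conjI ballI impI)
    show "F \<in> ?L" by (rule FL)
    show "\<And>y. y \<in> Y \<Longrightarrow> F \<subseteq> y" using YF by blast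
    fix z assume "z \<in> ?L" "\<forall>y\<in>Y. z \<subseteq> y"
    hence "z \<subseteq> \<Inter>Y" by blast
    thus "z \<subseteq> F" using \<open>\<Inter>Y \<subseteq> F\<close> by blast
  qed
  hence "F \<in> Y" using irr YL by blast
  thus ?thesis unfolding Y_def by blast
qed

lemma Fab_inj:
  assumes "(A,B) \<in> covers E" "(A',B') \<in> covers E" "Fab E A B = Fab E A' B'"
  shows "A = A' \<and> B = B'"
proof -
  have c: "A \<in> E" "B \<in> E" "A \<subset> B" "A' \<in> E" "B' \<in> E" "A' \<subset> B'"
    using assms by (auto simp: covers_def)
  have "A' \<notin> Fab E A' B'" "A \<notin> Fab E A B" using c by (auto simp: Fab_def)
  hence "A \<subseteq> A'" "A' \<subseteq> A" using assms(3) c by (auto simp: Fab_def)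
  hence AA: "A = A'" by auto
  have "B \<in> Fab E A B" "B' \<in> Fab E A' B'" using c by (auto simp: Fab_def)
  hence "B' \<subseteq> B" "B \<subseteq> B'" using assms(3) c AA by (auto simp: Fab_def)
  thus ?thesis using AA by auto
qed

theorem proposition6:
  fixes G :: "'g set" and M :: "'m set" and I :: "('g \<times> 'm) set"
  assumes "formal_context G M I"
  shows "card {F. meet_irreducible (down_closure_systems G (Ext G M I)) F}
         = card (covers (Ext G M I))"
proof -
  let ?E = "Ext G M I"
  have cs: "closure_system G ?E" using ext_cs[OF assms] .
  have fin: "finite G" using assms by (simp add: formal_context_def)
  have "bij_betw (\<lambda>(A,B). Fab ?E A B) (covers ?E)
          {F. meet_irreducible (down_closure_systems G ?E) F}"
    unfolding bij_betw_def
  proof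
    show "inj_on (\<lambda>(A,B). Fab ?E A B) (covers ?E)"
      unfolding inj_on_def using Fab_inj by fast
    show "(\<lambda>(A,B). Fab ?E A B) ` covers ?E = {F. meet_irreducible (down_closure_systems G ?E) F}"
    proof
      show "(\<lambda>(A,B). Fab ?E A B) ` covers ?E \<subseteq> {F. meet_irreducible (down_closure_systems G ?E) F}"
        using Fab_mi[OF cs] by auto
      show "{F. meet_irreducible (down_closure_systems G ?E) F} \<subseteq> (\<lambda>(A,B). Fab ?E A B) ` covers ?E"
      proof
        fix F assume "F \<in> {F. meet_irreducible (down_closure_systems G ?E) F}"
        then obtain A B where "(A,B) \<in> covers ?E" "F = Fab ?E A B" using mi_Fab[OF cs fin] by blast
        thus "F \<in> (\<lambda>(A,B). Fab ?E A B) ` covers ?E" by force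
      qed
    qed
  qed
  thus ?thesis using bij_betw_same_card by metis
qed

end
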